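(* For integers $q\ge1$, $a$, $n$ let $S(q,a,n)=\sum_{x=1}^q e\big(\frac{ax^2+nx}{q}\big)$, and for integers $n_1,n_2,n_3,m$ let $$T(q;n_1,n_2,n_3,m)=\sum_{\substack{a=1\\ (a,q)=1}}^q S(q,a,n_1)S(q,a,n_2)S(q,a,n_3)\,e\Big(\frac{\overline{a}\,m}{q}\Big),$$ where $\overline{a}$ is the inverse of $a$ modulo $q$. Let $p>2$ be a prime. Then for every positive integer $r$ and all integers $n_1,n_2,n_3,m$, $$|T(p^r;n_1,n_2,n_3,m)|\le p^{5r/2},$$ and moreover $$|T(p;n_1,n_2,n_3,m)|\le p^{2}.$$
   Context: $e(z)=e^{2\pi i z}$. *)

theory Defs
  imports "HOL-Analysis.Analysis" "HOL-Number_Theory.Number_Theory"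
begin

definition e :: "real \<Rightarrow> complex" where
  "e z = exp (2 * pi * \<i> * complex_of_real z)"

definition inv_mod :: "int \<Rightarrow> int \<Rightarrow> int" where
  "inv_mod q a = (THE b. b \<in> {1..q} \<and> [a * b = 1] (mod q))"

definition S :: "int \<Rightarrow> int \<Rightarrow> int \<Rightarrow> complex" where
  "S q a n = (\<Sum>x\<in>{1..q}. e (real_of_int (a * x^2 + n * x) / real_of_int q))"

definition T :: "int \<Rightarrow> int \<Rightarrow> int \<Rightarrow> int \<Rightarrow> int \<Rightarrow> complex" where
  "T q n1 n2 n3 m = (\<Sum>a\<in>{a\<in>{1..q}. coprime a q}.
      S q a n1 * S q a n2 * S q a n3 * e (real_of_int (inv_mod q a * m) / real_of_int q))"

end

theory Submission
  imports Defs
begin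


lemma e_add: "e (x + y) = e x * e y"
  unfolding e_def by (simp add: distrib_left exp_add[symmetric])

lemma e_int: "e (real_of_int k) = 1"
proof -
  have "e (real_of_int k) = exp (complex_of_real (2 * real_of_int k * pi) * \<i>)"
    unfolding e_def by (simp add: mult_ac)
  also have "\<dots> = 1" by (rule exp_integer_2pi) simp
  finally show ?thesis .
qed

lemma norm_e: "cmod (e x) = 1"
  unfolding e_def by (simp add: norm_exp_eq_Re)

lemma cnj_e: "cnj (e x) = e (- x)"
  unfolding e_def by (simp add: exp_cnj)

lemma e_eq_1_iff: "e x = 1 \<longleftrightarrow> x \<in> \<int>"
proof
  assume "e x = 1"
  then obtain n :: int where "2 * pi * x = real_of_int (2 * n) * pi"
    unfolding e_def exp_eq_1 by auto
  then have "x = of_int n" by simp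
  then show "x \<in> \<int>" by simp
next
  assume "x \<in> \<int>" then obtain k where "x = of_int k" by (auto elim: Ints_cases)
  then show "e x = 1" by (simp add: e_int)
qed

definition E :: "int \<Rightarrow> int \<Rightarrow> complex" where
  "E q k = e (real_of_int k / real_of_int q)"

lemma E_add: "q \<noteq> 0 \<Longrightarrow> E q (a + b) = E q a * E q b"
  unfolding E_def by (simp add: add_divide_distrib e_add)

lemma E_0[simp]: "E q 0 = 1"
  unfolding E_def using e_int[of 0] by simp

lemma norm_E[simp]: "cmod (E q k) = 1"
  unfolding E_def by (simp add: norm_e)

lemma cnj_E: "cnj (E q k) = E q (- k)"
  unfolding E_def by (simp add: cnj_e)

lemma E_mult_q: "q \<noteq> 0 \<Longrightarrow> E q (q * j) = 1"
  unfolding E_def using e_int[of j] by simp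

lemma E_cong: assumes "q \<noteq> 0" "[k = l] (mod q)" shows "E q k = E q l"
proof -
  from assms(2) have "q dvd k - l" by (simp add: cong_iff_dvd_diff)
  then obtain j where j: "k = l + q * j" by (auto simp: dvd_def algebra_simps)
  show ?thesis using assms(1) by (simp add: j E_add E_mult_q)
qed

lemma E_mod: "q \<noteq> 0 \<Longrightarrow> E q (k mod q) = E q k"
  by (rule E_cong) (auto simp: cong_def)

lemma E_eq_1_iff: "q \<noteq> 0 \<Longrightarrow> E q k = 1 \<longleftrightarrow> q dvd k"
proof
  assume q: "q \<noteq> 0" and "E q k = 1"
  then have "real_of_int k / real_of_int q \<in> \<int>" unfolding E_def e_eq_1_iff by simp
  then obtain j where "real_of_int k / real_of_int q = of_int j" by (auto elim: Ints_cases)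
  then have "real_of_int k = real_of_int (q * j)" using q by (simp add: field_simps)
  then have "k = q * j" by linarith
  then show "q dvd k" by simp
next
  assume "q \<noteq> 0" "q dvd k" then show "E q k = 1" by (auto simp: E_mult_q)
qed



definition periodic :: "int \<Rightarrow> (int \<Rightarrow> complex) \<Rightarrow> bool" where
  "periodic q f \<longleftrightarrow> (\<forall>x. f (x mod q) = f x)"

lemma sum_shift:
  assumes q: "q > 0" and f: "periodic q f"
  shows "(\<Sum>x\<in>{0..<q}. f (x + c)) = (\<Sum>x\<in>{0..<q}. f x)"
proof -
  have "(\<Sum>x\<in>{0..<q}. f (x + c)) = (\<Sum>x\<in>{0..<q}. f ((x + c) mod q))"
    using f unfolding periodic_def by simp
  also have "\<dots> = (\<Sum>x\<in>{0..<q}. f x)"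
  proof (rule sum.reindex_bij_witness[of _ "\<lambda>y. (y - c) mod q" "\<lambda>x. (x + c) mod q"])
    fix a assume "a \<in> {0..<q}" then show "(((a + c) mod q) - c) mod q = a"
      by (simp add: mod_diff_left_eq)
  next
    fix b assume "b \<in> {0..<q}" then show "((b - c) mod q + c) mod q = b"
      by (simp add: mod_add_left_eq)
  qed (use q in auto)
  finally show ?thesis .
qed



lemma sum_mult:
  assumes q: "q > 0" and f: "periodic q f" and a: "coprime a q"
  shows "(\<Sum>x\<in>{0..<q}. f (a * x)) = (\<Sum>x\<in>{0..<q}. f x)"
proof -
  obtain a' where a': "[a * a' = 1] (mod q)" using cong_solve_coprime_int[OF a] by blast
  have "(\<Sum>x\<in>{0..<q}. f (a * x)) = (\<Sum>x\<in>{0..<q}. f ((a * x) mod q))"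
    using f unfolding periodic_def by simp
  also have "\<dots> = (\<Sum>x\<in>{0..<q}. f x)"
  proof (rule sum.reindex_bij_witness[of _ "\<lambda>y. (a' * y) mod q" "\<lambda>x. (a * x) mod q"])
    fix x assume x: "x \<in> {0..<q}"
    have "[a' * ((a * x) mod q) = a' * (a * x)] (mod q)"
      by (intro cong_mult cong_refl) (simp add: cong_def)
    also have "a' * (a * x) = (a * a') * x" by simp
    also have "[\<dots> = 1 * x] (mod q)" by (intro cong_mult a' cong_refl)
    finally show "(a' * ((a * x) mod q)) mod q = x" using x by (simp add: cong_def)
  next
    fix y assume y: "y \<in> {0..<q}"
    have "[a * ((a' * y) mod q) = a * (a' * y)] (mod q)"
      by (intro cong_mult cong_refl) (simp add: cong_def)
    also have "a * (a' * y) = (a * a') * y" by simp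
    also have "[\<dots> = 1 * y] (mod q)" by (intro cong_mult a' cong_refl)
    finally show "(a * ((a' * y) mod q)) mod q = y" using y by (simp add: cong_def)
  qed (use q in auto)
  finally show ?thesis .
qed

lemma sum_1q:
  assumes q: "q > 0" and f: "periodic q f"
  shows "(\<Sum>x\<in>{1..q}. f x) = (\<Sum>x\<in>{0..<q}. f x)"
proof -
  have "(\<Sum>x\<in>{1..q}. f x) = (\<Sum>x\<in>{0..<q}. f (x + 1))"
    by (rule sum.reindex_bij_witness[of _ "\<lambda>x. x + 1" "\<lambda>x. x - 1"]) auto
  also have "\<dots> = (\<Sum>x\<in>{0..<q}. f x)" by (rule sum_shift[OF q f])
  finally show ?thesis .
qed

lemma periodic_E: "q \<noteq> 0 \<Longrightarrow> (\<And>x. [P (x mod q) = P x] (mod q)) \<Longrightarrow> periodic q (\<lambda>x. E q (P x))"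
  unfolding periodic_def using E_cong by blast

lemma geom_sum:
  assumes q: "q > 0"
  shows "(\<Sum>y\<in>{0..<q}. E q (k * y)) = (if q dvd k then of_int q else 0)"
proof (cases "q dvd k")
  case True
  then have "\<And>y. E q (k * y) = 1" using q by (auto simp: E_eq_1_iff)
  then show ?thesis using True q by simp
next
  case False
  let ?s = "\<Sum>y\<in>{0..<q}. E q (k * y)"
  have per: "periodic q (\<lambda>y. E q (k * y))"
    unfolding periodic_def
  proof
    fix y
    have "[k * (y mod q) = k * y] (mod q)" by (rule cong_mult[OF cong_refl]) (simp add: cong_def)
    then show "E q (k * (y mod q)) = E q (k * y)" using q by (intro E_cong) auto
  qed
  have "(\<Sum>y\<in>{0..<q}. E q (k * (y + 1))) = ?s"
    using sum_shift[OF q per, of 1] by simp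
  moreover have "(\<Sum>y\<in>{0..<q}. E q (k * (y + 1))) = E q k * ?s"
    using q by (simp add: distrib_left E_add sum_distrib_left ac_simps)
  ultimately have "(E q k - 1) * ?s = 0" by (simp add: algebra_simps)
  moreover have "E q k \<noteq> 1" using False q by (simp add: E_eq_1_iff)
  ultimately show ?thesis using False by simp
qed




lemma per_quad: assumes "q \<noteq> 0" shows "periodic q (\<lambda>x. E q (a*x^2 + n*x))"
  unfolding periodic_def
proof
  fix x
  have m: "[x mod q = x] (mod q)" by (simp add: cong_def)
  have "[a*(x mod q)^2 + n*(x mod q) = a*x^2 + n*x] (mod q)"
    by (intro cong_add cong_mult cong_refl cong_pow m)
  then show "E q (a*(x mod q)^2 + n*(x mod q)) = E q (a*x^2 + n*x)" using assms by (rule E_cong[rotated])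
qed

lemma S_eq: assumes "q > 0" shows "S q a n = (\<Sum>x\<in>{0..<q}. E q (a*x^2 + n*x))"
proof -
  have "S q a n = (\<Sum>x\<in>{1..q}. E q (a*x^2 + n*x))" unfolding S_def E_def by simp
  also have "\<dots> = (\<Sum>x\<in>{0..<q}. E q (a*x^2 + n*x))"
    by (rule sum_1q) (use assms per_quad in auto)
  finally show ?thesis .
qed

lemma gauss_norm:
  assumes q: "q > 0" and cop: "coprime (2*a) q"
  shows "S q a n * cnj (S q a n) = of_int q"
proof -
  define f where "f = (\<lambda>x. E q (a*x^2 + n*x))"
  have q0: "q \<noteq> 0" using q by simp
  have perf: "periodic q f" unfolding f_def using per_quad[OF q0] .
  have "S q a n * cnj (S q a n) = (\<Sum>x\<in>{0..<q}. f x) * (\<Sum>y\<in>{0..<q}. cnj (f y))"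
    using S_eq[OF q] unfolding f_def by simp
  also have "\<dots> = (\<Sum>y\<in>{0..<q}. \<Sum>x\<in>{0..<q}. f x * cnj (f y))"
    unfolding sum_product by (rule sum.swap)
  also have "\<dots> = (\<Sum>y\<in>{0..<q}. \<Sum>h\<in>{0..<q}. E q (a*h^2 + n*h) * E q ((2*a*h)*y))"
  proof (rule sum.cong[OF refl])
    fix y
    have pery: "periodic q (\<lambda>x. f x * cnj (f y))" using perf unfolding periodic_def by simp
    have "(\<Sum>x\<in>{0..<q}. f x * cnj (f y)) = (\<Sum>h\<in>{0..<q}. f (h + y) * cnj (f y))"
      using sum_shift[OF q pery, of y] by simp
    also have "\<dots> = (\<Sum>h\<in>{0..<q}. E q (a*h^2 + n*h) * E q ((2*a*h)*y))"
    proof (rule sum.cong[OF refl])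
      fix h
      have "f (h + y) * cnj (f y) = E q ((a*(h+y)^2 + n*(h+y)) + (- (a*y^2 + n*y)))"
        unfolding f_def cnj_E by (rule E_add[OF q0, symmetric])
      also have "(a*(h+y)^2 + n*(h+y)) + (- (a*y^2 + n*y)) = (a*h^2 + n*h) + (2*a*h)*y"
        by (simp add: power2_eq_square algebra_simps)
      finally show "f (h + y) * cnj (f y) = E q (a*h^2 + n*h) * E q ((2*a*h)*y)"
        by (simp add: E_add[OF q0])
    qed
    finally show "(\<Sum>x\<in>{0..<q}. f x * cnj (f y)) = \<dots>" .
  qed
  also have "\<dots> = (\<Sum>h\<in>{0..<q}. E q (a*h^2 + n*h) * (\<Sum>y\<in>{0..<q}. E q ((2*a*h)*y)))"
    unfolding sum_distrib_left by (rule sum.swap)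
  also have "\<dots> = (\<Sum>h\<in>{0..<q}. (if h = 0 then of_int q else 0))"
  proof (rule sum.cong[OF refl])
    fix h assume h: "h \<in> {0..<q}"
    have "q dvd 2*a*h \<longleftrightarrow> q dvd h"
      using cop by (metis coprime_commute coprime_dvd_mult_right_iff mult.commute)
    also have "\<dots> \<longleftrightarrow> h = 0"
      using h zdvd_imp_le[of q h] by force
    finally show "E q (a*h^2 + n*h) * (\<Sum>y\<in>{0..<q}. E q ((2*a*h)*y)) = (if h = 0 then of_int q else 0)"
      using geom_sum[OF q, of "2*a*h"] by auto
  qed
  also have "\<dots> = of_int q" using q by simp
  finally show ?thesis .
qed

lemma norm_S:
  assumes q: "q > 0" and cop: "coprime (2*a) q"
  shows "cmod (S q a n) = sqrt (real_of_int q)"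
proof -
  have "complex_of_real ((cmod (S q a n))^2) = of_int q"
    using gauss_norm[OF assms] complex_norm_square by metis
  then have "(cmod (S q a n))^2 = real_of_int q"
    by (metis of_real_eq_iff of_real_of_int_eq)
  then show ?thesis by (metis norm_ge_zero real_sqrt_unique)
qed




lemma cop2: assumes "prime p" "p > 2" shows "coprime 2 (int p ^ r)"
proof -
  have "odd p" using assms by (metis prime_odd_nat)
  then have "coprime 2 (int p)" by (simp add: coprime_commute)
  then show ?thesis by simp
qed

lemma part1:
  assumes pp: "prime p" and p2: "p > 2" and r: "r \<ge> 1"
  shows "cmod (T (int p ^ r) n1 n2 n3 m) \<le> real p powr (5 * real r / 2)"
proof -
  define q where "q = int p ^ r"
  have q: "q > 0" unfolding q_def using p2 by simp
  define A where "A = {a\<in>{1..q}. coprime a q}"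
  have fin: "finite A" unfolding A_def by (rule finite_subset[of _ "{1..q}"]) auto
  have nS: "cmod (S q a n) = sqrt q" if "a \<in> A" for a n
  proof (rule norm_S[OF q])
    have "coprime a q" using that unfolding A_def by simp
    moreover have "coprime 2 q" unfolding q_def by (rule cop2[OF pp p2])
    ultimately show "coprime (2*a) q" by simp
  qed
  have "cmod (T q n1 n2 n3 m) \<le> (\<Sum>a\<in>A. cmod (S q a n1 * S q a n2 * S q a n3 * e (real_of_int (inv_mod q a * m) / real_of_int q)))"
    unfolding T_def A_def by (rule norm_sum)
  also have "\<dots> = (\<Sum>a\<in>A. sqrt q ^ 3)"
    by (rule sum.cong[OF refl]) (simp add: norm_mult nS norm_e power3_eq_cube)
  also have "\<dots> = real (card A) * sqrt q ^ 3" by simp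
  also have "\<dots> \<le> real_of_int q * sqrt q ^ 3"
  proof (rule mult_right_mono)
    have "card A \<le> card {1..q}" unfolding A_def by (rule card_mono) auto
    then show "real (card A) \<le> real_of_int q" using q by simp
  qed (use q in simp)
  also have "\<dots> = real_of_int q powr (5/2)"
  proof -
    have qq: "real_of_int q > 0" using q by simp
    have "real_of_int q powr (5/2) = real_of_int q powr 2 * real_of_int q powr (1/2)"
      by (simp add: powr_add[symmetric])
    also have "\<dots> = real_of_int q ^ 2 * sqrt q"
      using qq by (simp add: powr_half_sqrt powr_numeral)
    also have "sqrt q ^ 3 = sqrt q * sqrt q * sqrt q" by (simp add: power3_eq_cube)
    then have "real_of_int q * sqrt q ^ 3 = real_of_int q ^ 2 * sqrt q"
      using qq by (simp add: power2_eq_square)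
    ultimately show ?thesis by simp
  qed
  also have "\<dots> = real p powr (5 * real r / 2)"
  proof -
    have "real_of_int q = real p ^ r" unfolding q_def by simp
    also have "\<dots> = real p powr real r" using p2 by (simp add: powr_realpow)
    finally show ?thesis by (simp add: powr_powr mult.commute)
  qed
  finally show ?thesis unfolding q_def .
qed




lemma dvd_small: fixes P d :: int assumes "P dvd d" "\<bar>d\<bar> < P" shows "d = 0"
proof (rule ccontr)
  assume "d \<noteq> 0"
  then have "\<bar>P\<bar> \<le> \<bar>d\<bar>" using dvd_imp_le_int assms(1) by blast
  then show False using assms(2) by simp
qed

lemma Legendre_cong: assumes "[y = z] (mod P)" shows "Legendre y P = Legendre z P"
proof -
  have "[y = 0] (mod P) \<longleftrightarrow> [z = 0] (mod P)" using assms unfolding cong_def by simp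
  moreover have "QuadRes P y \<longleftrightarrow> QuadRes P z" unfolding QuadRes_def using assms
    unfolding cong_def by simp
  ultimately show ?thesis unfolding Legendre_def by simp
qed

lemma Legendre_mod: "Legendre (y mod P) P = Legendre y P"
  by (rule Legendre_cong) (simp add: cong_def)

lemma Legendre_vals: "Legendre y P \<in> {-1, 0, 1}"
  unfolding Legendre_def by simp

lemma Legendre_unit: assumes "\<not> P dvd y" shows "Legendre y P = 1 \<or> Legendre y P = -1"
  using assms unfolding Legendre_def cong_0_iff by simp

lemma Legendre_one: assumes "P > 1" shows "Legendre 1 P = 1"
proof -
  have "\<not> [1 = 0] (mod P)" using assms by (simp add: cong_def)
  moreover have "QuadRes P 1" unfolding QuadRes_def by (rule exI[of _ 1]) simp
  ultimately show ?thesis unfolding Legendre_def by simp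
qed



lemma Legendre_mult:
  fixes p :: nat assumes pp: "prime p" and p2: "2 < p"
  shows "Legendre (a*b) (int p) = Legendre a (int p) * Legendre b (int p)"
proof -
  define P where "P = int p"
  have p2': "2 < P" unfolding P_def using p2 by simp
  have "[Legendre (a*b) P = (a*b) ^ ((p - 1) div 2)] (mod P)"
    using euler_criterion[OF pp p2] unfolding P_def by simp
  moreover have "[Legendre a P * Legendre b P = a ^ ((p - 1) div 2) * b ^ ((p - 1) div 2)] (mod P)"
    using euler_criterion[OF pp p2] unfolding P_def by (intro cong_mult) simp_all
  ultimately have "[Legendre (a*b) P = Legendre a P * Legendre b P] (mod P)"
    by (metis cong_sym cong_trans power_mult_distrib)
  then have "P dvd Legendre (a*b) P - Legendre a P * Legendre b P"
    by (simp add: cong_iff_dvd_diff)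
  moreover have "\<bar>Legendre (a*b) P - Legendre a P * Legendre b P\<bar> < P"
    using Legendre_vals[of "a*b" P] Legendre_vals[of a P] Legendre_vals[of b P] p2' by auto
  ultimately show ?thesis unfolding P_def[symmetric] using dvd_small by (metis eq_iff_diff_eq_0)
qed




lemma fiber_card:
  fixes P :: int assumes pp: "prime P" and p2: "2 < P" and y: "y \<in> {0..<P}"
  shows "int (card {x\<in>{0..<P}. x^2 mod P = y}) = 1 + Legendre y P"
proof (cases "y = 0")
  case True
  have "x = 0" if x: "x \<in> {0..<P}" "x^2 mod P = y" for x
  proof -
    have "P dvd x^2" using True x(2) by (simp add: dvd_eq_mod_eq_0)
    then have "P dvd x" by (rule prime_dvd_power[OF pp])
    then show "x = 0" using x by (intro dvd_small[of P x]) auto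
  qed
  moreover have "(0::int) \<in> {0..<P}" "(0::int)^2 mod P = y" using True p2 by auto
  ultimately have "{x\<in>{0..<P}. x^2 mod P = y} = {0}" by blast
  moreover have "Legendre y P = 0" using True unfolding Legendre_def by simp
  ultimately show ?thesis by simp
next
  case False
  have ym: "y mod P = y" using y by simp
  have ny: "\<not> [y = 0] (mod P)" unfolding cong_def ym using False by simp
  show ?thesis
  proof (cases "QuadRes P y")
    case True
    then obtain z where z: "[z^2 = y] (mod P)" unfolding QuadRes_def by blast
    define x0 where "x0 = z mod P"
    have x0r: "x0 \<in> {0..<P}" unfolding x0_def using p2 by auto
    have x0y: "[x0^2 = y] (mod P)"
    proof -
      have "[x0 = z] (mod P)" unfolding x0_def by (simp add: cong_def)
      then have "[x0^2 = z^2] (mod P)" by (rule cong_pow)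
      then show ?thesis using z by (rule cong_trans)
    qed
    have x00: "x0 \<noteq> 0" using x0y ny by (auto simp: cong_def)
    have A: "x = x0 \<or> x = P - x0" if x: "x \<in> {0..<P}" "x^2 mod P = y" for x
    proof -
      have "[x^2 = x0^2] (mod P)" using x(2) x0y y by (auto simp: cong_def)
      moreover have "(x - x0) * (x + x0) = x^2 - x0^2" by (simp add: power2_eq_square algebra_simps)
      ultimately have "P dvd (x - x0) * (x + x0)"
        by (simp add: cong_iff_dvd_diff)
      then have "P dvd x - x0 \<or> P dvd x + x0" using pp by (simp add: prime_dvd_mult_iff)
      then show ?thesis
      proof
        assume "P dvd x - x0" then show ?thesis using x x0r dvd_small[of P "x - x0"] by auto
      next
        assume "P dvd x + x0"
        then have "P dvd x + x0 - P" by simp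
        then have "x + x0 - P = 0" using x x0r x00 by (intro dvd_small) auto
        then show ?thesis by simp
      qed
    qed
    have B1: "x0^2 mod P = y" using x0y y by (auto simp: cong_def)
    have "(P - x0)^2 - x0^2 = P * (P - 2*x0)" by (simp add: power2_eq_square algebra_simps)
    then have "[(P - x0)^2 = x0^2] (mod P)"
      unfolding cong_iff_dvd_diff by simp
    then have B2: "(P - x0)^2 mod P = y" using x0y y by (auto simp: cong_def)
    have "{x\<in>{0..<P}. x^2 mod P = y} = {x0, P - x0}"
      using A B1 B2 x0r x00 by auto
    moreover have "x0 \<noteq> P - x0"
    proof
      assume "x0 = P - x0" then have "P = 2 * x0" by simp
      then have "even P" by simp
      moreover have "odd P" using pp p2 by (metis prime_odd_int)
      ultimately show False by simp
    qed
    moreover have "Legendre y P = 1" using ny True unfolding Legendre_def by simp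
    ultimately show ?thesis by simp
  next
    case False
    have "False" if "x^2 mod P = y" for x
    proof -
      have "[x^2 = y] (mod P)" using that y by (auto simp: cong_def)
      then show False using False unfolding QuadRes_def by blast
    qed
    then have "{x\<in>{0..<P}. x^2 mod P = y} = {}" by auto
    then have "card {x\<in>{0..<P}. x^2 mod P = y} = 0" by (simp only: card.empty)
    moreover have "Legendre y P = -1" using ny False unfolding Legendre_def by simp
    ultimately show ?thesis by simp
  qed
qed




lemma g_fiber:
  fixes p :: nat assumes pp: "prime p" and p2: "2 < p"
  shows "S (int p) c 0 = (\<Sum>y\<in>{0..<int p}. (1 + of_int (Legendre y (int p))) * E (int p) (c*y))"
proof -
  define P where "P = int p"
  have P0: "P > 0" "P \<noteq> 0" unfolding P_def using p2 by auto
  have ppP: "prime P" unfolding P_def using pp by simp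
  have p2P: "2 < P" unfolding P_def using p2 by simp
  have "S P c 0 = (\<Sum>x\<in>{0..<P}. E P (c*x^2 + 0*x))" by (rule S_eq[OF P0(1)])
  also have "\<dots> = (\<Sum>x\<in>{0..<P}. E P (c * (x^2 mod P)))"
  proof (rule sum.cong[OF refl])
    fix x
    have "[c*x^2 = c * (x^2 mod P)] (mod P)"
      by (rule cong_mult[OF cong_refl]) (simp add: cong_def)
    then show "E P (c*x^2 + 0*x) = E P (c * (x^2 mod P))" using E_cong[OF P0(2)] by simp
  qed
  also have "\<dots> = (\<Sum>y\<in>{0..<P}. \<Sum>x\<in>{x\<in>{0..<P}. x^2 mod P = y}. E P (c * (x^2 mod P)))"
    by (rule sum.group[symmetric]) (use P0 in auto)
  also have "\<dots> = (\<Sum>y\<in>{0..<P}. (1 + of_int (Legendre y P)) * E P (c*y))"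
  proof (rule sum.cong[OF refl])
    fix y assume y: "y \<in> {0..<P}"
    have "(\<Sum>x\<in>{x\<in>{0..<P}. x^2 mod P = y}. E P (c * (x^2 mod P)))
        = (\<Sum>x\<in>{x\<in>{0..<P}. x^2 mod P = y}. E P (c * y))" by (rule sum.cong) auto
    also have "\<dots> = of_nat (card {x\<in>{0..<P}. x^2 mod P = y}) * E P (c*y)" by simp
    also have "of_nat (card {x\<in>{0..<P}. x^2 mod P = y}) = (of_int (int (card {x\<in>{0..<P}. x^2 mod P = y})) :: complex)"
      by simp
    also have "int (card {x\<in>{0..<P}. x^2 mod P = y}) = 1 + Legendre y P"
      by (rule fiber_card[OF ppP p2P y])
    finally show "(\<Sum>x\<in>{x\<in>{0..<P}. x^2 mod P = y}. E P (c * (x^2 mod P))) = (1 + of_int (Legendre y P)) * E P (c*y)"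
      by simp
  qed
  finally show ?thesis unfolding P_def .
qed

lemma g_legendre:
  fixes p :: nat assumes pp: "prime p" and p2: "2 < p" and c: "\<not> int p dvd c"
  shows "S (int p) c 0 = (\<Sum>y\<in>{0..<int p}. of_int (Legendre y (int p)) * E (int p) (c*y))"
proof -
  have P0: "int p > 0" using p2 by simp
  have "S (int p) c 0 = (\<Sum>y\<in>{0..<int p}. E (int p) (c*y)) + (\<Sum>y\<in>{0..<int p}. of_int (Legendre y (int p)) * E (int p) (c*y))"
    unfolding g_fiber[OF pp p2] by (simp add: distrib_right sum.distrib)
  also have "(\<Sum>y\<in>{0..<int p}. E (int p) (c*y)) = 0" using geom_sum[OF P0, of c] c by simp
  finally show ?thesis by simp
qed

lemma legendre_sum0:
  fixes p :: nat assumes pp: "prime p" and p2: "2 < p"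
  shows "(\<Sum>y\<in>{0..<int p}. (of_int (Legendre y (int p)) :: complex)) = 0"
proof -
  have P0: "int p > 0" using p2 by simp
  have "S (int p) 0 0 = of_int (int p)" using S_eq[OF P0, of 0 0] P0 by simp
  moreover have "S (int p) 0 0 = of_int (int p) + (\<Sum>y\<in>{0..<int p}. (of_int (Legendre y (int p)) :: complex))"
    unfolding g_fiber[OF pp p2] using P0 by (simp add: sum.distrib)
  ultimately show ?thesis by simp
qed

lemma g_mult:
  fixes p :: nat assumes pp: "prime p" and p2: "2 < p" and a: "\<not> int p dvd a"
  shows "S (int p) a 0 = of_int (Legendre a (int p)) * S (int p) 1 0"
proof -
  define P where "P = int p"
  have P0: "P > 0" "P \<noteq> 0" unfolding P_def using p2 by auto
  have ppP: "prime P" unfolding P_def using pp by simp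
  have aP: "\<not> P dvd a" using a unfolding P_def .
  have cop: "coprime a P" using ppP aP by (metis coprime_commute prime_imp_coprime)
  define f where "f = (\<lambda>y. (of_int (Legendre y P) :: complex) * E P y)"
  have perf: "periodic q f" if "q = P" for q
    unfolding periodic_def f_def that by (simp add: Legendre_mod E_mod[OF P0(2)])
  have P1: "\<not> P dvd 1" using p2 zdvd_imp_le[of P 1] unfolding P_def by auto
  have "S P 1 0 = (\<Sum>y\<in>{0..<P}. f y)" unfolding f_def P_def
    using g_legendre[OF pp p2, of 1] P1 unfolding P_def by simp
  also have "\<dots> = (\<Sum>y\<in>{0..<P}. f (a*y))" by (rule sum_mult[OF P0(1) perf cop, symmetric]) simp
  also have "\<dots> = of_int (Legendre a P) * (\<Sum>y\<in>{0..<P}. of_int (Legendre y P) * E P (a*y))"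
    unfolding f_def sum_distrib_left
    by (rule sum.cong[OF refl]) (simp add: P_def Legendre_mult[OF pp p2])
  also have "(\<Sum>y\<in>{0..<P}. of_int (Legendre y P) * E P (a*y)) = S P a 0"
    using g_legendre[OF pp p2 a] unfolding P_def by simp
  finally have "S P 1 0 = of_int (Legendre a P) * S P a 0" .
  then have "of_int (Legendre a P) * S P 1 0 = (of_int (Legendre a P))^2 * S P a 0"
    by (simp add: power2_eq_square)
  moreover have "(Legendre a P)^2 = 1" using Legendre_unit[OF aP] by auto
  then have "(of_int (Legendre a P) :: complex)^2 = 1" by (metis of_int_1 of_int_power)
  ultimately show ?thesis unfolding P_def by simp
qed




lemma complete_sq:
  fixes p :: nat assumes pp: "prime p" and p2: "2 < p" and aw: "[a*w = 1] (mod int p)"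
  shows "S (int p) a n = E (int p) (w * (n^2 * ((int p + 1) div 2) * ((int p + 1) div 2 - 1))) * S (int p) a 0"
proof -
  define P where "P = int p"
  define i2 where "i2 = (P + 1) div 2"
  have P0: "P > 0" "P \<noteq> 0" unfolding P_def using p2 by auto
  have ppP: "prime P" unfolding P_def using pp by simp
  have oddP: "odd P" using ppP p2 unfolding P_def by (metis prime_odd_int of_nat_less_iff of_nat_numeral)
  have h2: "2*i2 = 1 + P" unfolding i2_def using oddP by presburger
  obtain k where hk: "a*w = 1 + P*k"
  proof -
    have "P dvd a*w - 1" using aw unfolding P_def by (simp add: cong_iff_dvd_diff)
    then obtain k where "a*w - 1 = P*k" by (auto simp: dvd_def)
    then show ?thesis using that[of k] by simp
  qed
  define t where "t = -n*w*i2"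
  have "S P a n = (\<Sum>x\<in>{0..<P}. E P (a*x^2 + n*x))" by (rule S_eq[OF P0(1)])
  also have "\<dots> = (\<Sum>x\<in>{0..<P}. E P (a*(x+t)^2 + n*(x+t)))"
    using sum_shift[OF P0(1) per_quad[OF P0(2), of a n], of t] by simp
  also have "\<dots> = (\<Sum>x\<in>{0..<P}. E P (w * (n^2 * i2 * (i2 - 1))) * E P (a*x^2 + 0*x))"
  proof (rule sum.cong[OF refl])
    fix x
    have "a*(x+t)^2 + n*(x+t) - (w * (n^2 * i2 * (i2 - 1)) + (a*x^2 + 0*x))
        = x*n*(1 - (a*w)*(2*i2)) + n^2*w*i2^2*(a*w - 1)"
      unfolding t_def power2_eq_square by (simp add: algebra_simps)
    also have "\<dots> = P * (- (x*n*(k + 1 + P*k)) + n^2*w*i2^2*k)"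
      unfolding hk h2 power2_eq_square by (simp add: algebra_simps)
    finally have "[a*(x+t)^2 + n*(x+t) = w * (n^2 * i2 * (i2 - 1)) + (a*x^2 + 0*x)] (mod P)"
      unfolding cong_iff_dvd_diff by (metis dvd_triv_left)
    then show "E P (a*(x+t)^2 + n*(x+t)) = E P (w * (n^2 * i2 * (i2 - 1))) * E P (a*x^2 + 0*x)"
      using E_cong[OF P0(2)] E_add[OF P0(2)] by metis
  qed
  also have "\<dots> = E P (w * (n^2 * i2 * (i2 - 1))) * S P a 0"
    unfolding S_eq[OF P0(1), of a 0] sum_distrib_left ..
  finally show ?thesis unfolding P_def i2_def .
qed

lemma inv_mod_eq:
  fixes P :: int assumes ppP: "prime P" and a: "a \<in> {1..<P}" and b: "b \<in> {1..P}" and ab: "[a*b = 1] (mod P)"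
  shows "inv_mod P a = b"
  unfolding inv_mod_def
proof (rule the_equality)
  show "b \<in> {1..P} \<and> [a * b = 1] (mod P)" using b ab by simp
next
  fix b' assume b': "b' \<in> {1..P} \<and> [a * b' = 1] (mod P)"
  have cop: "coprime a P"
  proof -
    have "\<not> P dvd a" using a zdvd_imp_le[of P a] by auto
    then show ?thesis using ppP by (metis coprime_commute prime_imp_coprime)
  qed
  have "[a*b' = a*b] (mod P)" using b' ab by (meson cong_sym cong_trans)
  then have "[b' = b] (mod P)" using cong_mult_lcancel[OF cop] by blast
  then have "P dvd b' - b" by (simp add: cong_iff_dvd_diff)
  moreover have "\<bar>b' - b\<bar> < P" using b b' by auto
  ultimately have "b' - b = 0" by (rule dvd_small)
  then show "b' = b" by simp
qed

lemma inv_mod_props: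
  fixes P :: int assumes ppP: "prime P" and a: "a \<in> {1..<P}"
  shows "inv_mod P a \<in> {1..<P} \<and> [a * inv_mod P a = 1] (mod P)"
proof -
  have P1: "P > 1" using ppP by (simp add: prime_gt_1_int)
  have cop: "coprime a P"
  proof -
    have "\<not> P dvd a" using a zdvd_imp_le[of P a] by auto
    then show ?thesis using ppP by (metis coprime_commute prime_imp_coprime)
  qed
  obtain x where x: "[a*x = 1] (mod P)" using cong_solve_coprime_int[OF cop] by blast
  define b where "b = x mod P"
  have bx: "[b = x] (mod P)" unfolding b_def by (simp add: cong_def)
  have ab: "[a*b = 1] (mod P)" using x bx by (meson cong_mult cong_refl cong_trans)
  have "b \<noteq> 0"
  proof
    assume "b = 0"
    then have "[0 = 1] (mod P)" using ab by simp
    then show False using P1 by (simp add: cong_def)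
  qed
  moreover have "0 \<le> b" "b < P" unfolding b_def using P1 by auto
  ultimately have br: "b \<in> {1..<P}" by auto
  have "inv_mod P a = b" by (rule inv_mod_eq[OF ppP a _ ab]) (use br in auto)
  then show ?thesis using br ab by simp
qed

lemma inv_inv:
  fixes P :: int assumes ppP: "prime P" and a: "a \<in> {1..<P}"
  shows "inv_mod P (inv_mod P a) = a"
proof -
  have h: "inv_mod P a \<in> {1..<P}" "[a * inv_mod P a = 1] (mod P)" using inv_mod_props[OF ppP a] by auto
  show ?thesis by (rule inv_mod_eq[OF ppP h(1)]) (use a h(2) in \<open>auto simp: mult.commute\<close>)
qed

lemma Legendre_inv:
  fixes p :: nat assumes pp: "prime p" and p2: "2 < p" and a: "a \<in> {1..<int p}"
  shows "Legendre (inv_mod (int p) a) (int p) = Legendre a (int p)"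
proof -
  define P where "P = int p"
  have ppP: "prime P" unfolding P_def using pp by simp
  have aP: "a \<in> {1..<P}" using a unfolding P_def .
  have h: "inv_mod P a \<in> {1..<P}" "[a * inv_mod P a = 1] (mod P)" using inv_mod_props[OF ppP aP] by auto
  have "Legendre a P * Legendre (inv_mod P a) P = Legendre (a * inv_mod P a) P"
    unfolding P_def by (rule Legendre_mult[OF pp p2, symmetric])
  also have "\<dots> = Legendre 1 P" by (rule Legendre_cong[OF h(2)])
  also have "\<dots> = 1" by (rule Legendre_one) (use p2 in \<open>simp add: P_def\<close>)
  finally have "Legendre a P * Legendre (inv_mod P a) P = 1" .
  moreover have "\<not> P dvd a" using aP zdvd_imp_le[of P a] by auto
  ultimately show ?thesis using Legendre_unit[of P a] unfolding P_def by auto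
qed




lemma part2:
  fixes p :: nat assumes pp: "prime p" and p2: "2 < p"
  shows "cmod (T (int p) n1 n2 n3 m) \<le> real p ^ 2"
proof -
  define P where "P = int p"
  define i2 where "i2 = (P + 1) div 2"
  define K where "K = n1^2 * i2 * (i2 - 1) + n2^2 * i2 * (i2 - 1) + n3^2 * i2 * (i2 - 1) + m"
  define G where "G = S P 1 0"
  define chi where "chi = (\<lambda>y. (of_int (Legendre y P) :: complex))"
  have P0: "P > 0" "P \<noteq> 0" unfolding P_def using p2 by auto
  have ppP: "prime P" unfolding P_def using pp by simp
  have P2: "2 < P" unfolding P_def using p2 by simp
  have notdvd: "\<not> P dvd a" if "a \<in> {1..<P}" for a using that zdvd_imp_le[of P a] by auto
  have A: "{a\<in>{1..P}. coprime a P} = {1..<P}"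
  proof -
    have cp: "coprime a P" if "a \<in> {1..<P}" for a
      using notdvd[OF that] ppP by (metis coprime_commute prime_imp_coprime)
    have ncp: "\<not> coprime P P" using P2 by simp
    have "x \<in> {a\<in>{1..P}. coprime a P} \<longleftrightarrow> x \<in> {1..<P}" for x
    proof (cases "x = P")
      case True then show ?thesis using ncp by simp
    next
      case False then show ?thesis using cp[of x] by auto
    qed
    then show ?thesis by blast
  qed
  have cub: "chi a ^ 3 = chi a" if "a \<in> {1..<P}" for a
    using Legendre_unit[OF notdvd[OF that]] unfolding chi_def by auto
  have termeq: "S P a n1 * S P a n2 * S P a n3 * e (real_of_int (inv_mod P a * m) / real_of_int P)
      = G^3 * (chi a * E P (inv_mod P a * K))" if a: "a \<in> {1..<P}" for a
  proof -
    define w where "w = inv_mod P a"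
    have aw: "[a*w = 1] (mod int p)" using inv_mod_props[OF ppP a] unfolding w_def P_def by simp
    have ga: "S P a 0 = chi a * G"
      unfolding chi_def G_def P_def by (rule g_mult[OF pp p2]) (use notdvd[OF a] in \<open>simp add: P_def\<close>)
    have "S P a n1 * S P a n2 * S P a n3 * e (real_of_int (w * m) / real_of_int P)
      = (E P (w * (n1^2 * i2 * (i2 - 1))) * S P a 0) * (E P (w * (n2^2 * i2 * (i2 - 1))) * S P a 0)
        * (E P (w * (n3^2 * i2 * (i2 - 1))) * S P a 0) * E P (w*m)"
      unfolding P_def i2_def E_def[symmetric] using complete_sq[OF pp p2 aw] by metis
    also have "\<dots> = S P a 0 ^ 3 * E P (w * K)"
      unfolding K_def distrib_left E_add[OF P0(2)] by (simp add: power3_eq_cube ac_simps)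
    also have "\<dots> = G^3 * (chi a * E P (w * K))"
      unfolding ga power_mult_distrib cub[OF a] by (simp add: ac_simps)
    finally show ?thesis unfolding w_def .
  qed
  have "T P n1 n2 n3 m = (\<Sum>a\<in>{1..<P}. G^3 * (chi a * E P (inv_mod P a * K)))"
    unfolding T_def A by (rule sum.cong[OF refl]) (rule termeq)
  also have "\<dots> = G^3 * (\<Sum>a\<in>{1..<P}. chi a * E P (inv_mod P a * K))"
    by (simp add: sum_distrib_left)
  also have "(\<Sum>a\<in>{1..<P}. chi a * E P (inv_mod P a * K)) = (\<Sum>b\<in>{1..<P}. chi b * E P (b * K))"
  proof (rule sum.reindex_bij_witness[of _ "inv_mod P" "inv_mod P"])
    fix a assume a: "a \<in> {1..<P}"
    show "inv_mod P (inv_mod P a) = a" by (rule inv_inv[OF ppP a])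
    show "inv_mod P a \<in> {1..<P}" using inv_mod_props[OF ppP a] by simp
    show "chi (inv_mod P a) * E P (inv_mod P a * K) = chi a * E P (inv_mod P a * K)"
      unfolding chi_def P_def using Legendre_inv[OF pp p2, of a] a unfolding P_def by simp
  next
    fix b assume b: "b \<in> {1..<P}"
    show "inv_mod P (inv_mod P b) = b" by (rule inv_inv[OF ppP b])
    show "inv_mod P b \<in> {1..<P}" using inv_mod_props[OF ppP b] by simp
  qed
  also have "(\<Sum>b\<in>{1..<P}. chi b * E P (b * K)) = (\<Sum>b\<in>{0..<P}. chi b * E P (K * b))"
  proof -
    have "{0..<P} = insert 0 {1..<P}" using P0 by auto
    moreover have "chi 0 = 0" unfolding chi_def Legendre_def by simp
    ultimately show ?thesis by (simp add: mult.commute)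
  qed
  finally have Teq: "T P n1 n2 n3 m = G^3 * (\<Sum>b\<in>{0..<P}. chi b * E P (K * b))" .
  have cop2: "coprime 2 P" using cop2[OF pp p2, of 1] unfolding P_def by simp
  have nG: "cmod G = sqrt P" unfolding G_def by (rule norm_S[OF P0(1)]) (use cop2 in simp)
  have nV: "cmod (\<Sum>b\<in>{0..<P}. chi b * E P (K * b)) \<le> sqrt P"
  proof (cases "P dvd K")
    case True
    then have "\<And>b. E P (K * b) = 1" using E_eq_1_iff[OF P0(2)] by auto
    then have "(\<Sum>b\<in>{0..<P}. chi b * E P (K * b)) = 0"
      using legendre_sum0[OF pp p2] unfolding chi_def P_def by simp
    then show ?thesis using P0 by simp
  next
    case False
    then have "(\<Sum>b\<in>{0..<P}. chi b * E P (K * b)) = S P K 0"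
      using g_legendre[OF pp p2, of K] unfolding chi_def P_def by simp
    moreover have "coprime K P" using False ppP by (metis coprime_commute prime_imp_coprime)
    then have "cmod (S P K 0) = sqrt P" by (intro norm_S[OF P0(1)]) (use cop2 in simp)
    ultimately show ?thesis by simp
  qed
  have "cmod (T P n1 n2 n3 m) = sqrt P ^ 3 * cmod (\<Sum>b\<in>{0..<P}. chi b * E P (K * b))"
    unfolding Teq norm_mult norm_power nG ..
  also have "\<dots> \<le> sqrt P ^ 3 * sqrt P" by (rule mult_left_mono[OF nV]) (use P0 in simp)
  also have "\<dots> = real p ^ 2" unfolding P_def
    by (simp add: power3_eq_cube power2_eq_square mult.assoc[symmetric])
  finally show ?thesis unfolding P_def .
qed



theorem lemma3p7:
  fixes p :: nat
  assumes "prime p" and "p > 2"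
  shows "(\<forall>(r::nat) n1 n2 n3 m. r \<ge> 1 \<longrightarrow>
            cmod (T (int p ^ r) n1 n2 n3 m) \<le> real p powr (5 * real r / 2))
       \<and> (\<forall>n1 n2 n3 m. cmod (T (int p) n1 n2 n3 m) \<le> real p ^ 2)"
  using part1[OF assms] part2[OF assms] by blast

end
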